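(* Let $g$ be a Riemannian metric on $\mathbb{R}^D$ written as $g_x(u,u)=u^{\top}H(x)u$, such that there exists $c_2>0$ with $g_x(u,u)\le c_2\|u\|_2^2$ for all $x,u$, and $\|H(x)-H(y)\|_{\mathcal{B}}\le L_H\|x-y\|_2$ for all $x,y$. Let $K_1,K_2>0$ and let $\mathcal{C}\subset\mathcal{C}_{K_1,K_2}$. Then for every $N\ge1$, $$\inf_{\gamma\in\mathcal{C}}\mathcal{E}^g_{\mathrm{tra},N}(\gamma)\le\inf_{\gamma\in\mathcal{C}}\mathcal{E}^g(\gamma)+C(K_1,K_2,N),\qquad C(K_1,K_2,N):=\frac{L_H(K_1^3+K_1^2K_2)}{N}+\frac{4c_2K_1K_2}{N}+\frac{4c_2K_2^2}{N^2}.$$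
   Context: $\|\cdot\|_2$ is the Euclidean norm, $\|\cdot\|_{\mathcal{B}}$ the operator norm, $\|f\|_{L^2([0,1])}^2=\int_0^1\|f\|_2^2dt$. $\mathcal{C}_{K_1,K_2}$ is the set of continuous piecewise $C^1$ curves $\gamma:[0,1]\to\mathbb{R}^D$ with $\|\dot\gamma\|_{L^2([0,1])}\le K_1$ and $\|\ddot\gamma\|_{L^2([0,1])}\le K_2$. $\mathcal{E}^g(\gamma)=\int_0^1 g_{\gamma(t)}(\dot\gamma,\dot\gamma)dt$. With $t_n=n/N$, $h=1/N$, $\beta(t_n)=(\gamma(t_{n+1})-\gamma(t_n))/h$, $\mathcal{E}^g_{\mathrm{tra},N}(\gamma)=\frac1N\sum_{n=0}^{N-1}g_{(\gamma(t_n)+\gamma(t_{n+1}))/2}(\beta(t_n),\beta(t_n))$. *)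

theory Defs
  imports "HOL-Analysis.Analysis"
begin

definition metric_g :: "(real^'n \<Rightarrow> real^'n^'n) \<Rightarrow> real^'n \<Rightarrow> real^'n \<Rightarrow> real^'n \<Rightarrow> real" where
  "metric_g H x u v = u \<bullet> (H x *v v)"

definition riemannian_matrix_field :: "(real^'n \<Rightarrow> real^'n^'n) \<Rightarrow> bool" where
  "riemannian_matrix_field H \<longleftrightarrow>
     (\<forall>x. transpose (H x) = H x \<and> (\<forall>u. u \<noteq> 0 \<longrightarrow> u \<bullet> (H x *v u) > 0))"

definition curve_class :: "real \<Rightarrow> real \<Rightarrow> (real \<Rightarrow> real^'n) set" where
  "curve_class K1 K2 = {\<gamma>. \<exists>\<gamma>' \<gamma>'' S.
      finite S \<and>
      continuous_on {0..1} \<gamma> \<and>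
      (\<forall>t\<in>{0..1}. (\<gamma> has_vector_derivative \<gamma>' t) (at t within {0..1})) \<and>
      continuous_on {0..1} \<gamma>' \<and>
      (\<forall>t\<in>{0..1} - S. (\<gamma>' has_vector_derivative \<gamma>'' t) (at t within {0..1})) \<and>
      (\<lambda>t. (norm (\<gamma>' t))\<^sup>2) integrable_on {0..1} \<and>
      (\<lambda>t. (norm (\<gamma>'' t))\<^sup>2) integrable_on {0..1} \<and>
      sqrt (integral {0..1} (\<lambda>t. (norm (\<gamma>' t))\<^sup>2)) \<le> K1 \<and>
      sqrt (integral {0..1} (\<lambda>t. (norm (\<gamma>'' t))\<^sup>2)) \<le> K2}"

definition energy :: "(real^'n \<Rightarrow> real^'n^'n) \<Rightarrow> (real \<Rightarrow> real^'n) \<Rightarrow> real" where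
  "energy H \<gamma> = integral {0..1} (\<lambda>t.
      let v = vector_derivative \<gamma> (at t within {0..1}) in metric_g H (\<gamma> t) v v)"

definition energy_tra :: "(real^'n \<Rightarrow> real^'n^'n) \<Rightarrow> nat \<Rightarrow> (real \<Rightarrow> real^'n) \<Rightarrow> real" where
  "energy_tra H N \<gamma> = (1 / real N) * (\<Sum>n<N.
      let tn = real n / real N; tn1 = real (Suc n) / real N;
          \<beta> = (1 / (1 / real N)) *\<^sub>R (\<gamma> tn1 - \<gamma> tn);
          m = (1/2) *\<^sub>R (\<gamma> tn + \<gamma> tn1)
      in metric_g H m \<beta> \<beta>)"

end

theory Submission
  imports Defs
begin

lemma psd_H: "riemannian_matrix_field H \<Longrightarrow> 0 \<le> u \<bullet> (H x *v u)"
  unfolding riemannian_matrix_field_def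
  by (cases "u = 0") (auto intro: less_imp_le)

lemma sym_form:
  assumes "transpose A = A"
  shows "u \<bullet> (A *v w) = w \<bullet> (A *v (u::real^'n))"
proof -
  have "u \<bullet> (A *v w) = (u v* A) \<bullet> w" by (simp add: dot_lmul_matrix)
  also have "\<dots> = (transpose A *v u) \<bullet> w" by (simp add: transpose_matrix_vector)
  also have "\<dots> = w \<bullet> (A *v u)" using assms by (simp add: inner_commute)
  finally show ?thesis .
qed

lemma quad_expand:
  assumes "transpose A = A"
  shows "(v - b) \<bullet> (A *v (v - b)) = v \<bullet> (A *v v) - 2 * (b \<bullet> (A *v v)) + b \<bullet> (A *v (b::real^'n))"
  using sym_form[OF assms, of v b]
  by (simp add: matrix_vector_mult_diff_distrib inner_diff_left inner_diff_right)

lemma jensen_interval: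
  fixes v :: "real \<Rightarrow> real^'n"
  assumes sym: "transpose A = A" and psd: "\<And>u. 0 \<le> u \<bullet> (A *v u)"
    and ab: "a \<le> b" and cont: "continuous_on {a..b} v"
    and vint: "(v has_integral ((b - a) *\<^sub>R \<beta>)) {a..b}"
  shows "(b - a) * (\<beta> \<bullet> (A *v \<beta>)) \<le> integral {a..b} (\<lambda>t. v t \<bullet> (A *v v t))"
proof -
  have bl: "bounded_linear (\<lambda>w. 2 * (\<beta> \<bullet> (A *v w)))"
    by (intro bounded_linear_const_mult bounded_linear_compose[OF bounded_linear_inner_right matrix_vector_mul_bounded_linear])
  have i1: "((\<lambda>t. 2 * (\<beta> \<bullet> (A *v v t))) has_integral 2 * (\<beta> \<bullet> (A *v ((b - a) *\<^sub>R \<beta>)))) {a..b}"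
    using has_integral_linear[OF vint bl] by (simp add: o_def)
  have i2: "((\<lambda>t. \<beta> \<bullet> (A *v \<beta>)) has_integral (b - a) * (\<beta> \<bullet> (A *v \<beta>))) {a..b}"
    using has_integral_const_real[of "\<beta> \<bullet> (A *v \<beta>)" a b] ab by simp
  have i3: "((\<lambda>t. 2 * (\<beta> \<bullet> (A *v v t)) - \<beta> \<bullet> (A *v \<beta>)) has_integral
      2 * (\<beta> \<bullet> (A *v ((b - a) *\<^sub>R \<beta>))) - (b - a) * (\<beta> \<bullet> (A *v \<beta>))) {a..b}"
    by (rule has_integral_diff[OF i1 i2])
  have cq: "continuous_on {a..b} (\<lambda>t. v t \<bullet> (A *v v t))"
    by (intro continuous_intros cont continuous_on_compose2[OF linear_continuous_on[OF matrix_vector_mul_bounded_linear] cont]) auto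
  have i4: "((\<lambda>t. v t \<bullet> (A *v v t)) has_integral integral {a..b} (\<lambda>t. v t \<bullet> (A *v v t))) {a..b}"
    using integrable_continuous_interval[OF cq] by (rule integrable_integral)
  have le: "2 * (\<beta> \<bullet> (A *v v t)) - \<beta> \<bullet> (A *v \<beta>) \<le> v t \<bullet> (A *v v t)" for t
    using quad_expand[OF sym, of "v t" \<beta>] psd[of "v t - \<beta>"] by linarith
  have "2 * (\<beta> \<bullet> (A *v ((b - a) *\<^sub>R \<beta>))) - (b - a) * (\<beta> \<bullet> (A *v \<beta>)) \<le> integral {a..b} (\<lambda>t. v t \<bullet> (A *v v t))"
    by (rule has_integral_le[OF i3 i4 le])
  moreover have "\<beta> \<bullet> (A *v ((b - a) *\<^sub>R \<beta>)) = (b - a) * (\<beta> \<bullet> (A *v \<beta>))"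
    by (simp add: matrix_vector_mult_scaleR)
  ultimately show ?thesis by linarith
qed



lemma sup_bound:
  fixes v v'' :: "real \<Rightarrow> real^'n"
  assumes S: "finite S" and cv: "continuous_on {0..1} v"
    and dv: "\<forall>t\<in>{0..1} - S. (v has_vector_derivative v'' t) (at t within {0..1})"
    and i1: "(\<lambda>t. (norm (v t))\<^sup>2) integrable_on {0..1}"
    and i2: "(\<lambda>t. (norm (v'' t))\<^sup>2) integrable_on {0..1}"
    and b1: "integral {0..1} (\<lambda>t. (norm (v t))\<^sup>2) \<le> K1\<^sup>2"
    and b2: "integral {0..1} (\<lambda>t. (norm (v'' t))\<^sup>2) \<le> K2\<^sup>2"
    and K1: "0 \<le> K1" and K2: "0 < K2"
    and t: "t \<in> {0..1}"
  shows "norm (v t) \<le> K1 + K2"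
proof -
  have ftc: "(v'' has_integral v d - v c) {c..d}" if "0 \<le> c" "c \<le> d" "d \<le> 1" for c d
  proof (rule fundamental_theorem_of_calculus_strong[where S = "S \<union> {c, d}"])
    show "finite (S \<union> {c, d})" using S by simp
    show "c \<le> d" by fact
    show "continuous_on {c..d} v" using cv by (rule continuous_on_subset) (use that in auto)
    fix x assume x: "x \<in> {c..d} - (S \<union> {c, d})"
    then have "x \<in> interior {0..1::real}" using that by auto
    then have "at x within {0..1} = at x" by (rule at_within_interior)
    moreover have "x \<in> {0..1} - S" using x that by auto
    ultimately show "(v has_vector_derivative v'' x) (at x)"
      using dv by metis
  qed
  have vi: "v'' integrable_on {0..1}" using ftc[of 0 1] by (auto intro: has_integral_integrable)
  have meas: "(\<lambda>t. norm (v'' t)) \<in> borel_measurable (lebesgue_on {0..1})"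
    using measurable_compose[OF integrable_imp_measurable[OF vi] borel_measurable_norm] .
  define g where "g t = ((norm (v'' t))\<^sup>2 / K2 + K2) / 2" for t
  have amgm: "x \<le> (x\<^sup>2 / K2 + K2) / 2" for x :: real
  proof -
    have "0 \<le> (x - K2)\<^sup>2" by simp
    then have "2 * x * K2 \<le> x\<^sup>2 + K2\<^sup>2" by (simp add: power2_eq_square algebra_simps)
    then show ?thesis using K2 by (simp add: field_simps power2_eq_square)
  qed
  have amgm2: "x * 2 \<le> x\<^sup>2 / K2 + K2" for x :: real using amgm[of x] by (simp add: field_simps)
  have gi: "g integrable_on {0..1}"
    unfolding g_def by (intro integrable_on_divide integrable_add integrable_const_ivl i2)
  have ni: "(\<lambda>t. norm (v'' t)) integrable_on {0..1}"
    by (rule measurable_bounded_by_integrable_imp_integrable[OF meas gi]) (auto simp: g_def amgm amgm2)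
  have "integral {0..1} (\<lambda>t. norm (v'' t)) \<le> integral {0..1} g"
    by (rule integral_le[OF ni gi]) (simp add: g_def amgm amgm2)
  also have "integral {0..1} g = (integral {0..1} (\<lambda>t. (norm (v'' t))\<^sup>2) / K2 + K2) / 2"
    unfolding g_def using i2
    by (simp add: integral_divide integral_add[OF integrable_on_divide[OF i2] integrable_const_ivl])
  also have "\<dots> \<le> (K2\<^sup>2 / K2 + K2) / 2"
    using b2 K2 by (intro divide_right_mono add_right_mono divide_right_mono) auto
  also have "\<dots> = K2" using K2 by (simp add: power2_eq_square)
  finally have nK2: "integral {0..1} (\<lambda>t. norm (v'' t)) \<le> K2" .
  have diff: "norm (v d - v c) \<le> K2" if "0 \<le> c" "c \<le> d" "d \<le> 1" for c d
  proof -
    have "v d - v c = integral {c..d} v''" using ftc[OF that] by (simp add: integral_unique)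
    then have "norm (v d - v c) \<le> integral {c..d} (\<lambda>t. norm (v'' t))"
      using integral_norm_bound_integral[of v'' "{c..d}" "\<lambda>t. norm (v'' t)"]
        integrable_on_subinterval[OF ni, of c d] ftc[OF that] that by auto
    also have "\<dots> \<le> integral {0..1} (\<lambda>t. norm (v'' t))"
      using that by (intro integral_subset_le ni integrable_on_subinterval[OF ni]) auto
    finally show ?thesis using nK2 by linarith
  qed
  obtain s where s: "s \<in> {0..1}" "\<forall>y\<in>{0..1}. norm (v s) \<le> norm (v y)"
    using continuous_attains_inf[OF compact_Icc, of 0 "1::real" "\<lambda>t. norm (v t)"]
      continuous_on_norm[OF cv] by auto
  have "integral {0..1::real} (\<lambda>t. (norm (v s))\<^sup>2) \<le> integral {0..1} (\<lambda>t. (norm (v t))\<^sup>2)"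
    using s by (intro integral_le i1) (auto intro: power_mono)
  then have "(norm (v s))\<^sup>2 \<le> K1\<^sup>2" using b1 by simp
  then have vs: "norm (v s) \<le> K1" using K1 by (rule power2_le_imp_le)
  have "norm (v t - v s) \<le> K2"
  proof (cases "s \<le> t")
    case True then show ?thesis using diff[of s t] s t by auto
  next
    case False then show ?thesis using diff[of t s] s t by (auto simp: norm_minus_commute)
  qed
  then show ?thesis using vs norm_triangle_ineq2[of "v t" "v s"] by linarith
qed



lemma H_entry_cont:
  fixes H :: "real^'n \<Rightarrow> real^'n^'n"
  assumes lip: "\<forall>x y. onorm (\<lambda>v. (H x - H y) *v v) \<le> L * norm (x - y)" and L: "0 \<le> L"
  shows "continuous_on S (\<lambda>x. H x $ i $ j)"
proof -
  have "L-lipschitz_on UNIV (\<lambda>x. H x $ i $ j)"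
  proof (rule lipschitz_onI[OF _ L])
    fix x y :: "real^'n"
    have "dist (H x $ i $ j) (H y $ i $ j) = \<bar>((H x - H y) *v axis j 1) $ i\<bar>"
      by (simp add: matrix_vector_mult_basis column_def dist_real_def)
    also have "\<dots> \<le> norm ((H x - H y) *v axis j 1)" by (rule component_le_norm_cart)
    also have "\<dots> \<le> onorm (\<lambda>v. (H x - H y) *v v) * norm (axis j (1::real))"
      by (rule onorm[OF matrix_vector_mul_bounded_linear])
    also have "\<dots> \<le> L * dist x y" using lip by (simp add: dist_norm)
    finally show "dist (H x $ i $ j) (H y $ i $ j) \<le> L * dist x y" .
  qed
  then show ?thesis by (rule continuous_on_subset[OF lipschitz_on_continuous_on]) simp
qed

lemma cont_form:
  fixes w :: "'a::topological_space \<Rightarrow> real^'n" and M :: "'a \<Rightarrow> real^'n^'n"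
  assumes "continuous_on S w" "\<And>i j. continuous_on S (\<lambda>t. M t $ i $ j)"
  shows "continuous_on S (\<lambda>t. w t \<bullet> (M t *v w t))"
proof -
  have eq: "(\<lambda>t. w t \<bullet> (M t *v w t)) = (\<lambda>t. \<Sum>i\<in>UNIV. w t $ i * (\<Sum>j\<in>UNIV. M t $ i $ j * w t $ j))"
    by (simp add: inner_vec_def matrix_vector_mult_def)
  show ?thesis unfolding eq
    by (intro continuous_on_sum continuous_on_mult continuous_on_component assms)
qed

lemma mv_bound:
  fixes \<gamma> v :: "real \<Rightarrow> real^'n"
  assumes dg: "\<forall>t\<in>{0..1}. (\<gamma> has_vector_derivative v t) (at t within {0..1})"
    and vb: "\<forall>t\<in>{0..1}. norm (v t) \<le> M" and M: "0 \<le> M"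
    and xy: "0 \<le> x" "x \<le> y" "y \<le> 1"
  shows "norm (\<gamma> y - \<gamma> x) \<le> M * (y - x)"
proof -
  have "(v has_integral \<gamma> y - \<gamma> x) {x..y}"
    by (rule fundamental_theorem_of_calculus[OF xy(2)])
       (use xy in \<open>auto intro!: has_vector_derivative_within_subset[OF dg[rule_format]]\<close>)
  then have "norm (\<gamma> y - \<gamma> x) \<le> M * Henstock_Kurzweil_Integration.content {x..y}"
    by (rule has_integral_bound_real[OF M finite.emptyI]) (use vb xy in auto)
  then show ?thesis using xy by simp
qed



lemma interval_est:
  fixes H :: "real^'n \<Rightarrow> real^'n^'n" and \<gamma> v :: "real \<Rightarrow> real^'n"
  assumes riem: "riemannian_matrix_field H"
    and lip: "\<forall>x y. onorm (\<lambda>v. (H x - H y) *v v) \<le> L * norm (x - y)" and L: "0 \<le> L"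
    and M: "0 \<le> M"
    and cg: "continuous_on {0..1} \<gamma>"
    and dg: "\<forall>t\<in>{0..1}. (\<gamma> has_vector_derivative v t) (at t within {0..1})"
    and cv: "continuous_on {0..1} v"
    and vb: "\<forall>t\<in>{0..1}. norm (v t) \<le> M"
    and ab: "0 \<le> a" "a < b" "b \<le> 1"
  shows "(b - a) * metric_g H ((1/2) *\<^sub>R (\<gamma> a + \<gamma> b)) ((1 / (b - a)) *\<^sub>R (\<gamma> b - \<gamma> a)) ((1 / (b - a)) *\<^sub>R (\<gamma> b - \<gamma> a))
    \<le> integral {a..b} (\<lambda>t. metric_g H (\<gamma> t) (v t) (v t)) + L * (b - a) * M * integral {a..b} (\<lambda>t. (norm (v t))\<^sup>2)"
proof -
  define m where "m = (1/2) *\<^sub>R (\<gamma> a + \<gamma> b)"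
  define \<beta> where "\<beta> = (1 / (b - a)) *\<^sub>R (\<gamma> b - \<gamma> a)"
  define A where "A = H m"
  have sym: "transpose A = A" using riem unfolding riemannian_matrix_field_def A_def by blast
  have psd: "\<And>u. 0 \<le> u \<bullet> (A *v u)" unfolding A_def by (rule psd_H[OF riem])
  have sub: "{a..b} \<subseteq> {0..1}" using ab by auto
  have cva: "continuous_on {a..b} v" using cv sub by (rule continuous_on_subset)
  have hb: "(b - a) *\<^sub>R \<beta> = \<gamma> b - \<gamma> a" using ab by (simp add: \<beta>_def)
  have ftc: "(v has_integral ((b - a) *\<^sub>R \<beta>)) {a..b}"
    unfolding hb
    by (rule fundamental_theorem_of_calculus) 
       (use ab sub in \<open>auto intro!: has_vector_derivative_within_subset[OF dg[rule_format]]\<close>)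
  have J: "(b - a) * (\<beta> \<bullet> (A *v \<beta>)) \<le> integral {a..b} (\<lambda>t. v t \<bullet> (A *v v t))"
    by (rule jensen_interval[OF sym psd _ cva ftc]) (use ab in simp)
  have ent: "continuous_on {a..b} (\<lambda>t. H (\<gamma> t) $ i $ j)" for i j
    by (rule continuous_on_compose2[OF H_entry_cont[OF lip L] continuous_on_subset[OF cg sub]]) auto
  have c1: "continuous_on {a..b} (\<lambda>t. v t \<bullet> (A *v v t))"
    by (rule cont_form[OF cva]) simp
  have c2: "continuous_on {a..b} (\<lambda>t. v t \<bullet> (H (\<gamma> t) *v v t))"
    by (rule cont_form[OF cva ent])
  have c3: "continuous_on {a..b} (\<lambda>t. (norm (v t))\<^sup>2)"
    by (intro continuous_intros cva)
  have pw: "v t \<bullet> (A *v v t) \<le> v t \<bullet> (H (\<gamma> t) *v v t) + L * (b - a) * M * (norm (v t))\<^sup>2"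
    if t: "t \<in> {a..b}" for t
  proof -
    have d1: "norm (\<gamma> t - \<gamma> a) \<le> M * (t - a)" using mv_bound[OF dg vb M, of a t] ab t by auto
    have d2: "norm (\<gamma> b - \<gamma> t) \<le> M * (b - t)" using mv_bound[OF dg vb M, of t b] ab t by auto
    have "m - \<gamma> t = (1/2) *\<^sub>R ((\<gamma> b - \<gamma> t) - (\<gamma> t - \<gamma> a))"
      by (simp add: m_def vec_eq_iff algebra_simps)
    then have "norm (m - \<gamma> t) \<le> (1/2) * (norm (\<gamma> b - \<gamma> t) + norm (\<gamma> t - \<gamma> a))"
      using norm_triangle_ineq4[of "\<gamma> b - \<gamma> t" "\<gamma> t - \<gamma> a"] by simp
    also have "\<dots> \<le> (1/2) * (M * (b - t) + M * (t - a))" using d1 d2 by simp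
    also have "\<dots> \<le> (b - a) * M" using M ab mult_left_mono[of a b M] by (simp add: algebra_simps)
    finally have dm: "norm (m - \<gamma> t) \<le> (b - a) * M" .
    have "v t \<bullet> (A *v v t) - v t \<bullet> (H (\<gamma> t) *v v t) = v t \<bullet> ((A - H (\<gamma> t)) *v v t)"
      by (simp add: matrix_vector_mult_diff_rdistrib inner_diff_right)
    also have "\<dots> \<le> norm (v t) * norm ((A - H (\<gamma> t)) *v v t)"
      by (rule order_trans[OF abs_ge_self Cauchy_Schwarz_ineq2])
    also have "\<dots> \<le> norm (v t) * (onorm (\<lambda>u. (A - H (\<gamma> t)) *v u) * norm (v t))"
      by (intro mult_left_mono onorm[OF matrix_vector_mul_bounded_linear]) simp
    also have "\<dots> \<le> norm (v t) * (L * norm (m - \<gamma> t) * norm (v t))"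
      using lip unfolding A_def by (intro mult_left_mono mult_right_mono) auto
    also have "\<dots> \<le> norm (v t) * (L * ((b - a) * M) * norm (v t))"
      using dm L by (intro mult_left_mono mult_right_mono) auto
    also have "\<dots> = L * (b - a) * M * (norm (v t))\<^sup>2" by (simp add: power2_eq_square)
    finally show ?thesis by linarith
  qed
  have "integral {a..b} (\<lambda>t. v t \<bullet> (A *v v t)) \<le>
        integral {a..b} (\<lambda>t. v t \<bullet> (H (\<gamma> t) *v v t) + L * (b - a) * M * (norm (v t))\<^sup>2)"
    by (intro integral_le integrable_continuous_interval c1 continuous_intros c2 c3 pw) auto
  also have "\<dots> = integral {a..b} (\<lambda>t. v t \<bullet> (H (\<gamma> t) *v v t)) + L * (b - a) * M * integral {a..b} (\<lambda>t. (norm (v t))\<^sup>2)"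
    by (subst integral_add) (auto intro!: integrable_continuous_interval c2 c3 continuous_intros)
  finally show ?thesis using J unfolding metric_g_def m_def[symmetric] \<beta>_def[symmetric] A_def by linarith
qed



lemma integral_split_N:
  fixes f :: "real \<Rightarrow> real"
  assumes fi: "f integrable_on {0..1}" and N: "N \<ge> 1"
  shows "integral {0..1} f = (\<Sum>n<N. integral {real n / real N..real (Suc n) / real N} f)"
proof -
  have "k \<le> N \<Longrightarrow> integral {0..real k / real N} f = (\<Sum>n<k. integral {real n / real N..real (Suc n) / real N} f)" for k
  proof (induction k)
    case 0 then show ?case by simp
  next
    case (Suc k)
    have le1: "real (Suc k) / real N \<le> 1" using Suc.prems N by simp
    have le0: "real k / real N \<le> real (Suc k) / real N" using N by (simp add: divide_right_mono)
    have "integral {0..real k / real N} f + integral {real k / real N..real (Suc k) / real N} f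
          = integral {0..real (Suc k) / real N} f"
      using Henstock_Kurzweil_Integration.integral_combine[where a=0 and c="real k / real N" and b="real (Suc k) / real N" and f=f] le0 le1
        integrable_on_subinterval[OF fi, of 0 "real (Suc k) / real N"] by simp
    then show ?case using Suc by simp
  qed
  from this[of N] show ?thesis using N by simp
qed

lemma per_curve:
  fixes H :: "real^'n \<Rightarrow> real^'n^'n" and \<gamma> :: "real \<Rightarrow> real^'n"
  assumes riem: "riemannian_matrix_field H"
    and lip: "\<forall>x y. onorm (\<lambda>v. (H x - H y) *v v) \<le> L * norm (x - y)" and L: "0 \<le> L"
    and K1: "K1 > 0" and K2: "K2 > 0" and g: "\<gamma> \<in> curve_class K1 K2" and N: "N \<ge> 1"
  shows "energy_tra H N \<gamma> \<le> energy H \<gamma> + L * (K1 + K2) * K1\<^sup>2 / real N"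
proof -
  obtain v v'' S where S: "finite S" and cg: "continuous_on {0..1} \<gamma>"
    and dg: "\<forall>t\<in>{0..1}. (\<gamma> has_vector_derivative v t) (at t within {0..1})"
    and cv: "continuous_on {0..1} v"
    and dv: "\<forall>t\<in>{0..1} - S. (v has_vector_derivative v'' t) (at t within {0..1})"
    and i1: "(\<lambda>t. (norm (v t))\<^sup>2) integrable_on {0..1}"
    and i2: "(\<lambda>t. (norm (v'' t))\<^sup>2) integrable_on {0..1}"
    and s1: "sqrt (integral {0..1} (\<lambda>t. (norm (v t))\<^sup>2)) \<le> K1"
    and s2: "sqrt (integral {0..1} (\<lambda>t. (norm (v'' t))\<^sup>2)) \<le> K2"
    using g unfolding curve_class_def by blast
  have sq: "x \<le> K\<^sup>2" if "sqrt x \<le> K" "0 \<le> x" for x K :: real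
  proof -
    have "sqrt x ^ 2 \<le> K ^ 2" using that by (intro power_mono) auto
    then show ?thesis using that by simp
  qed
  have b1: "integral {0..1} (\<lambda>t. (norm (v t))\<^sup>2) \<le> K1\<^sup>2"
    by (rule sq[OF s1 integral_nonneg[OF i1]]) simp
  have b2: "integral {0..1} (\<lambda>t. (norm (v'' t))\<^sup>2) \<le> K2\<^sup>2"
    by (rule sq[OF s2 integral_nonneg[OF i2]]) simp
  define M where "M = K1 + K2"
  have M: "0 \<le> M" using K1 K2 by (simp add: M_def)
  have vb: "\<forall>t\<in>{0..1}. norm (v t) \<le> M"
    unfolding M_def using sup_bound[OF S cv dv i1 i2 b1 b2 _ K2] K1 by auto
  define F where "F t = metric_g H (\<gamma> t) (v t) (v t)" for t
  define G where "G t = (norm (v t))\<^sup>2" for t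
  have ent: "continuous_on {0..1} (\<lambda>t. H (\<gamma> t) $ i $ j)" for i j
    by (rule continuous_on_compose2[OF H_entry_cont[OF lip L] cg]) auto
  have Fi: "F integrable_on {0..1}"
    unfolding F_def metric_g_def by (intro integrable_continuous_interval cont_form[OF cv ent])
  have Gi: "G integrable_on {0..1}" using i1 by (simp add: G_def[abs_def])
  have en: "energy H \<gamma> = integral {0..1} F"
    unfolding energy_def F_def Let_def
  proof (rule integral_cong)
    fix x :: real assume x: "x \<in> {0..1}"
    have "vector_derivative \<gamma> (at x within {0..1}) = v x"
      by (rule vector_derivative_within_closed_interval) (use x dg in auto)
    then show "metric_g H (\<gamma> x) (vector_derivative \<gamma> (at x within {0..1})) (vector_derivative \<gamma> (at x within {0..1})) = metric_g H (\<gamma> x) (v x) (v x)" by simp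
  qed
  let ?a = "\<lambda>n. real n / real N" and ?b = "\<lambda>n. real (Suc n) / real N"
  have Npos: "0 < real N" using N by simp
  have termb: "(1 / real N) * (let tn = ?a n; tn1 = ?b n;
          \<beta> = (1 / (1 / real N)) *\<^sub>R (\<gamma> tn1 - \<gamma> tn);
          m = (1/2) *\<^sub>R (\<gamma> tn + \<gamma> tn1)
      in metric_g H m \<beta> \<beta>) \<le> integral {?a n..?b n} F + L * (1 / real N) * M * integral {?a n..?b n} G"
    if n: "n < N" for n
  proof -
    have ba: "?b n - ?a n = 1 / real N" using Npos by (simp add: field_simps)
    have ab: "0 \<le> ?a n" "?a n < ?b n" "?b n \<le> 1" using n Npos by (auto simp: field_simps)
    show ?thesis
      using interval_est[OF riem lip L M cg dg cv vb ab] unfolding ba Let_def F_def G_def by simp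
  qed
  have "energy_tra H N \<gamma> = (\<Sum>n<N. (1 / real N) * (let tn = ?a n; tn1 = ?b n;
          \<beta> = (1 / (1 / real N)) *\<^sub>R (\<gamma> tn1 - \<gamma> tn);
          m = (1/2) *\<^sub>R (\<gamma> tn + \<gamma> tn1)
      in metric_g H m \<beta> \<beta>))"
    unfolding energy_tra_def by (simp add: sum_distrib_left)
  also have "\<dots> \<le> (\<Sum>n<N. integral {?a n..?b n} F + L * (1 / real N) * M * integral {?a n..?b n} G)"
    by (rule sum_mono) (use termb in auto)
  also have "\<dots> = (\<Sum>n<N. integral {?a n..?b n} F) + L * (1 / real N) * M * (\<Sum>n<N. integral {?a n..?b n} G)"
    by (simp add: sum.distrib sum_distrib_left)
  also have "\<dots> = energy H \<gamma> + L * (1 / real N) * M * integral {0..1} G"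
    using integral_split_N[OF Fi N] integral_split_N[OF Gi N] en by simp
  also have "\<dots> \<le> energy H \<gamma> + L * (1 / real N) * M * K1\<^sup>2"
    using b1 L M Npos unfolding G_def by (intro add_left_mono mult_left_mono) auto
  finally show ?thesis by (simp add: M_def)
qed


theorem proposition7p6:
  fixes H :: "real^'n \<Rightarrow> real^'n^'n"
    and c2 L_H K1 K2 :: real
    and C :: "(real \<Rightarrow> real^'n) set"
    and N :: nat
  assumes riem: "riemannian_matrix_field H"
    and c2_pos: "c2 > 0"
    and upper: "\<forall>x u. metric_g H x u u \<le> c2 * (norm u)\<^sup>2"
    and lip: "\<forall>x y. onorm (\<lambda>v. (H x - H y) *v v) \<le> L_H * norm (x - y)"
    and K1_pos: "K1 > 0" and K2_pos: "K2 > 0"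
    and C_sub: "C \<subseteq> curve_class K1 K2"
    and N_ge: "N \<ge> 1"
  shows "(INF \<gamma>\<in>C. energy_tra H N \<gamma>) \<le> (INF \<gamma>\<in>C. energy H \<gamma>)
           + (L_H * (K1^3 + K1\<^sup>2 * K2) / real N + 4 * c2 * K1 * K2 / real N
              + 4 * c2 * K2\<^sup>2 / (real N)\<^sup>2)"
proof -
  define c where "c = L_H * (K1^3 + K1\<^sup>2 * K2) / real N + 4 * c2 * K1 * K2 / real N
              + 4 * c2 * K2\<^sup>2 / (real N)\<^sup>2"
  have L: "0 \<le> L_H"
  proof -
    have "0 \<le> onorm (\<lambda>v. (H 1 - H 0) *v v)" by (rule onorm_pos_le[OF matrix_vector_mul_bounded_linear])
    also have "\<dots> \<le> L_H * norm (1 - 0 :: real^'n)" using lip by blast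
    finally have "0 \<le> L_H * norm (1 :: real^'n)" by simp
    moreover have "(1 :: real^'n) \<noteq> 0" by (simp add: vec_eq_iff)
    ultimately show ?thesis by (simp add: zero_le_mult_iff)
  qed
  have Npos: "0 < real N" using N_ge by simp
  have c0: "L_H * (K1 + K2) * K1\<^sup>2 / real N \<le> c"
  proof -
    have "L_H * (K1 + K2) * K1\<^sup>2 / real N = L_H * (K1^3 + K1\<^sup>2 * K2) / real N"
      by (simp add: algebra_simps power2_eq_square power3_eq_cube)
    moreover have "0 \<le> 4 * c2 * K1 * K2 / real N" using c2_pos K1_pos K2_pos Npos by simp
    moreover have "0 \<le> 4 * c2 * K2\<^sup>2 / (real N)\<^sup>2" using c2_pos by simp
    ultimately show ?thesis unfolding c_def by linarith
  qed
  have c_nn: "0 \<le> c"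
    by (rule order_trans[OF _ c0]) (use L K1_pos K2_pos Npos in simp)
  have each: "energy_tra H N \<gamma> \<le> energy H \<gamma> + c" if "\<gamma> \<in> C" for \<gamma>
    using per_curve[OF riem lip L K1_pos K2_pos _ N_ge, of \<gamma>] that C_sub c0 by auto
  have tra_nn: "0 \<le> energy_tra H N \<gamma>" for \<gamma>
    unfolding energy_tra_def Let_def metric_g_def
    by (intro mult_nonneg_nonneg sum_nonneg psd_H[OF riem]) auto
  show ?thesis
  proof (cases "C = {}")
    case True then show ?thesis using c_nn unfolding c_def[symmetric] by simp
  next
    case False
    have bdd: "bdd_below ((\<lambda>\<gamma>. energy_tra H N \<gamma>) ` C)"
      by (rule bdd_belowI[where m=0]) (use tra_nn in auto)
    have "(INF \<gamma>\<in>C. energy_tra H N \<gamma>) - c \<le> (INF \<gamma>\<in>C. energy H \<gamma>)"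
    proof (rule cINF_greatest[OF False])
      fix \<gamma> assume g: "\<gamma> \<in> C"
      have "(INF \<gamma>\<in>C. energy_tra H N \<gamma>) \<le> energy_tra H N \<gamma>" by (rule cINF_lower[OF bdd g])
      then show "(INF \<gamma>\<in>C. energy_tra H N \<gamma>) - c \<le> energy H \<gamma>" using each[OF g] by linarith
    qed
    then show ?thesis unfolding c_def[symmetric] by linarith
  qed
qed

end
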